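(* Let $p\ge1$, $m=2p$, let $\{\beta(k)\}_{k\ge0}$ be $p\times m$ matrices with $\beta(k)J\beta(k)^*=I_p$, put $C_k=2K^*\beta(k)^*\beta(k)K-j$, and consider the system $W_{k+1}(\lambda)-W_k(\lambda)=-\frac{i}{\lambda}jC_kW_k(\lambda)$, $W_0=I_m$, on the semiaxis $k\ge0$. Let $\varphi_\infty$ be the unique element of $\bigcap_{N\ge0}\mathcal N(N)$. Then $\varphi_\infty$ is the unique Weyl function of this system on the semiaxis, i.e. the unique $p\times p$ matrix function $\varphi$ holomorphic in $\mathbb C_-$ such that for every $\lambda\in\mathbb C_-$ $$\sum_{k=0}^\infty[i\varphi(\lambda)^*\ \ I_p]\,q(\lambda)^kKW_k(\lambda)^*C_kW_k(\lambda)K^*\begin{bmatrix}-i\varphi(\lambda)\\ I_p\end{bmatrix}<\infty.$$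
   Context: $\mathbb C_-$ is the open lower half-plane; $q(\lambda)=|\lambda|^2(|\lambda|^2+1)^{-1}$; $j=\mathrm{diag}(I_p,-I_p)$, $J=\begin{bmatrix}0&I_p\\ I_p&0\end{bmatrix}$, $K=\frac1{\sqrt2}\begin{bmatrix}I_p&-I_p\\ I_p&I_p\end{bmatrix}$. The series condition means convergence of the series of positive semidefinite matrices. For $N\ge0$ let $\mathcal W(N,\lambda)=\{\mathcal W_{ij}(N,\lambda)\}_{i,j=1}^2=KW_{N+1}(\bar\lambda)^*$ ($p\times p$ blocks), and $\mathcal N(N)$ the set of $p\times p$ matrix functions holomorphic in $\mathbb C_-$ of the form $i(\mathcal W_{21}(N,\cdot)R+\mathcal W_{22}(N,\cdot)Q)(\mathcal W_{11}(N,\cdot)R+\mathcal W_{12}(N,\cdot)Q)^{-1}$, with $R,Q$ $p\times p$ matrix functions meromorphic in $\mathbb C_-$, well defined at $-i$, $R^*R+Q^*Q>0$, $R^*R\le Q^*Q$. (It is known that $\bigcap_N\mathcal N(N)$ consists of exactly one function.) *)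

theory Defs
  imports "HOL-Complex_Analysis.Complex_Analysis"
begin

text \<open>Matrices over the complex numbers are represented as HOL-Analysis
vectors of vectors: an r x c matrix is a term of type complex^'c^'r.
The dimension p is a finite type 'p; the dimension m = 2p is the type 'p + 'p,
the first p indices being Inl a and the last p indices being Inr a.\<close>

definition cmat_smult :: "complex \<Rightarrow> complex^'n^'m \<Rightarrow> complex^'n^'m" where
  "cmat_smult c A = (\<chi> i j. c * A $ i $ j)"

definition adj :: "complex^'n^'m \<Rightarrow> complex^'m^'n" where
  "adj A = (\<chi> i j. cnj (A $ j $ i))"

definition psd :: "complex^'n^'n \<Rightarrow> bool" where
  "psd A \<longleftrightarrow> (\<forall>x::complex^'n. (\<Sum>i\<in>UNIV. cnj (x $ i) * (A *v x) $ i) \<in> \<real> \<and>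
                 0 \<le> Re (\<Sum>i\<in>UNIV. cnj (x $ i) * (A *v x) $ i))"

definition pd :: "complex^'n^'n \<Rightarrow> bool" where
  "pd A \<longleftrightarrow> psd A \<and> (\<forall>x::complex^'n. x \<noteq> 0 \<longrightarrow> 0 < Re (\<Sum>i\<in>UNIV. cnj (x $ i) * (A *v x) $ i))"

definition loewner_le :: "complex^'n^'n \<Rightarrow> complex^'n^'n \<Rightarrow> bool" where
  "loewner_le A B \<longleftrightarrow> psd (B - A)"

definition block2 :: "complex^'p^'p \<Rightarrow> complex^'p^'p \<Rightarrow> complex^'p^'p \<Rightarrow> complex^'p^'p
    \<Rightarrow> complex^('p::finite + 'p)^('p + 'p)" where
  "block2 A B C D = (\<chi> i j. case i of
       Inl a \<Rightarrow> (case j of Inl b \<Rightarrow> A $ a $ b | Inr b \<Rightarrow> B $ a $ b)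
     | Inr a \<Rightarrow> (case j of Inl b \<Rightarrow> C $ a $ b | Inr b \<Rightarrow> D $ a $ b))"

definition blk11 :: "complex^('p + 'p)^('p + 'p) \<Rightarrow> complex^'p^'p" where
  "blk11 M = (\<chi> a b. M $ Inl a $ Inl b)"
definition blk12 :: "complex^('p + 'p)^('p + 'p) \<Rightarrow> complex^'p^'p" where
  "blk12 M = (\<chi> a b. M $ Inl a $ Inr b)"
definition blk21 :: "complex^('p + 'p)^('p + 'p) \<Rightarrow> complex^'p^'p" where
  "blk21 M = (\<chi> a b. M $ Inr a $ Inl b)"
definition blk22 :: "complex^('p + 'p)^('p + 'p) \<Rightarrow> complex^'p^'p" where
  "blk22 M = (\<chi> a b. M $ Inr a $ Inr b)"

definition row2 :: "complex^'p^'p \<Rightarrow> complex^'p^'p \<Rightarrow> complex^('p + 'p)^'p" where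
  "row2 A B = (\<chi> a j. case j of Inl b \<Rightarrow> A $ a $ b | Inr b \<Rightarrow> B $ a $ b)"
definition col2 :: "complex^'p^'p \<Rightarrow> complex^'p^'p \<Rightarrow> complex^'p^('p + 'p)" where
  "col2 A B = (\<chi> i b. case i of Inl a \<Rightarrow> A $ a $ b | Inr a \<Rightarrow> B $ a $ b)"

definition jmat :: "complex^('p::finite + 'p)^('p + 'p)" where
  "jmat = block2 (mat 1) 0 0 (- mat 1)"
definition Jmat :: "complex^('p::finite + 'p)^('p + 'p)" where
  "Jmat = block2 0 (mat 1) (mat 1) 0"
definition Kmat :: "complex^('p::finite + 'p)^('p + 'p)" where
  "Kmat = cmat_smult (1 / complex_of_real (sqrt 2)) (block2 (mat 1) (- mat 1) (mat 1) (mat 1))"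

definition lhp :: "complex set" where
  "lhp = {z. Im z < 0}"
definition qfun :: "complex \<Rightarrow> real" where
  "qfun z = (cmod z)^2 / ((cmod z)^2 + 1)"

definition Cmat :: "(nat \<Rightarrow> complex^('p::finite + 'p)^'p) \<Rightarrow> nat \<Rightarrow> complex^('p::finite + 'p)^('p + 'p)" where
  "Cmat \<beta> k = cmat_smult 2 (adj Kmat ** adj (\<beta> k) ** \<beta> k ** Kmat) - jmat"

primrec Wsol :: "(nat \<Rightarrow> complex^('p::finite + 'p)^'p) \<Rightarrow> nat \<Rightarrow> complex \<Rightarrow> complex^('p::finite + 'p)^('p + 'p)" where
  "Wsol \<beta> 0 z = mat 1"
| "Wsol \<beta> (Suc k) z = Wsol \<beta> k z - cmat_smult (\<i> / z) (jmat ** Cmat \<beta> k ** Wsol \<beta> k z)"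

definition mat_holomorphic_on :: "(complex \<Rightarrow> complex^'n^'m) \<Rightarrow> complex set \<Rightarrow> bool" where
  "mat_holomorphic_on F S \<longleftrightarrow> (\<forall>i j. (\<lambda>z. F z $ i $ j) holomorphic_on S)"
definition mat_meromorphic_on :: "(complex \<Rightarrow> complex^'n^'m) \<Rightarrow> complex set \<Rightarrow> bool" where
  "mat_meromorphic_on F S \<longleftrightarrow> (\<forall>i j. (\<lambda>z. F z $ i $ j) meromorphic_on S)"
definition mat_analytic_at :: "(complex \<Rightarrow> complex^'n^'m) \<Rightarrow> complex \<Rightarrow> bool" where
  "mat_analytic_at F z \<longleftrightarrow> (\<forall>i j. (\<lambda>w. F w $ i $ j) analytic_on {z})"

definition Wcal :: "(nat \<Rightarrow> complex^('p::finite + 'p)^'p) \<Rightarrow> nat \<Rightarrow> complex \<Rightarrow> complex^('p::finite + 'p)^('p + 'p)" where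
  "Wcal \<beta> N z = Kmat ** adj (Wsol \<beta> (Suc N) (cnj z))"

definition Ncal :: "(nat \<Rightarrow> complex^('p::finite + 'p)^'p) \<Rightarrow> nat \<Rightarrow> (complex \<Rightarrow> complex^'p^'p) set" where
  "Ncal \<beta> N = {\<phi>. mat_holomorphic_on \<phi> lhp \<and>
     (\<exists>R Q :: complex \<Rightarrow> complex^'p^'p.
        mat_meromorphic_on R lhp \<and> mat_meromorphic_on Q lhp \<and>
        mat_analytic_at R (-\<i>) \<and> mat_analytic_at Q (-\<i>) \<and>
        (\<forall>z\<in>lhp. mat_analytic_at R z \<and> mat_analytic_at Q z \<longrightarrow>
           pd (adj (R z) ** R z + adj (Q z) ** Q z) \<and>
           loewner_le (adj (R z) ** R z) (adj (Q z) ** Q z) \<and>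
           invertible (blk11 (Wcal \<beta> N z) ** R z + blk12 (Wcal \<beta> N z) ** Q z) \<and>
           \<phi> z = cmat_smult \<i> ((blk21 (Wcal \<beta> N z) ** R z + blk22 (Wcal \<beta> N z) ** Q z) **
                    matrix_inv (blk11 (Wcal \<beta> N z) ** R z + blk12 (Wcal \<beta> N z) ** Q z))))}"

definition weyl_function :: "(nat \<Rightarrow> complex^('p::finite + 'p)^'p) \<Rightarrow> (complex \<Rightarrow> complex^'p^'p) \<Rightarrow> bool" where
  "weyl_function \<beta> \<phi> \<longleftrightarrow> mat_holomorphic_on \<phi> lhp \<and>
     (\<forall>z\<in>lhp. summable (\<lambda>k.
        row2 (cmat_smult \<i> (adj (\<phi> z))) (mat 1) **
        ((qfun z ^ k) *\<^sub>R (Kmat ** adj (Wsol \<beta> k z) ** Cmat \<beta> k ** Wsol \<beta> k z ** adj Kmat)) **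
        col2 (cmat_smult (-\<i>) (\<phi> z)) (mat 1)))"

end

theory Submission
  imports Defs
begin

definition cin :: "complex^'n \<Rightarrow> complex^'n \<Rightarrow> complex" where
  "cin a b = (\<Sum>i\<in>UNIV. cnj (a$i) * b$i)"
definition nsq :: "complex^'n \<Rightarrow> real" where
  "nsq a = (\<Sum>i\<in>UNIV. (cmod (a$i))^2)"
definition lo :: "complex^('p + 'p) \<Rightarrow> complex^'p" where "lo x = (\<chi> a. x $ Inl a)"
definition hi :: "complex^('p + 'p) \<Rightarrow> complex^'p" where "hi x = (\<chi> a. x $ Inr a)"
definition cv :: "complex^'p \<Rightarrow> complex^'p \<Rightarrow> complex^('p + 'p)" where
  "cv a b = (\<chi> i. case i of Inl k \<Rightarrow> a$k | Inr k \<Rightarrow> b$k)"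
definition jf :: "complex^('p::finite + 'p) \<Rightarrow> real" where
  "jf x = nsq (lo x) - nsq (hi x)"

lemma sum_UNIV_plus: "(\<Sum>i\<in>(UNIV::('a::finite+'b::finite) set). f i) = (\<Sum>a\<in>UNIV. f (Inl a)) + (\<Sum>b\<in>UNIV. f (Inr b))"
proof -
  have "sum f (UNIV::('a+'b) set) = sum f (UNIV <+> UNIV)" by (simp only: UNIV_Plus_UNIV)
  also have "\<dots> = sum (f \<circ> Inl) UNIV + sum (f \<circ> Inr) UNIV" by (rule sum.Plus) auto
  finally show ?thesis by (simp add: comp_def)
qed

lemma lo_cv[simp]: "lo (cv a b) = a" and hi_cv[simp]: "hi (cv a b) = b"
  by (simp_all add: lo_def hi_def cv_def)
lemma cv_lo_hi[simp]: "cv (lo x) (hi x) = x"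
  by (simp add: lo_def hi_def cv_def vec_eq_iff split: sum.split)
lemma cv_eq_iff: "cv a b = cv c d \<longleftrightarrow> a = c \<and> b = d"
  by (metis lo_cv hi_cv)
lemma cv_zero_iff: "cv a b = 0 \<longleftrightarrow> a = 0 \<and> b = 0"
  by (simp add: cv_def vec_eq_iff split: sum.split) (metis sum.simps(5,6))
lemma lo_add[simp]: "lo (x + y) = lo x + lo y" and hi_add[simp]: "hi (x + y) = hi x + hi y"
  and lo_diff[simp]: "lo (x - y) = lo x - lo y" and hi_diff[simp]: "hi (x - y) = hi x - hi y"
  and lo_neg[simp]: "lo (- x) = - lo x" and hi_neg[simp]: "hi (- x) = - hi x"
  and lo_smult[simp]: "lo (c *s x) = c *s lo x" and hi_smult[simp]: "hi (c *s x) = c *s hi x"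
  and lo_zero[simp]: "lo 0 = 0" and hi_zero[simp]: "hi 0 = 0"
  by (simp_all add: lo_def hi_def vec_eq_iff)
lemma cv_add: "cv a b + cv c d = cv (a + c) (b + d)"
  and cv_diff: "cv a b - cv c d = cv (a - c) (b - d)"
  and cv_smult: "(k::complex) *s cv a b = cv (k *s a) (k *s b)"
  by (simp_all add: cv_def vec_eq_iff split: sum.split)

lemma cin_split: "cin x y = cin (lo x) (lo y) + cin (hi x) (hi y)"
  by (simp add: cin_def sum_UNIV_plus lo_def hi_def)
lemma nsq_split: "nsq x = nsq (lo x) + nsq (hi x)"
  by (simp add: nsq_def sum_UNIV_plus lo_def hi_def)

lemma cin_add_right: "cin a (b + c) = cin a b + cin a c"
  and cin_add_left: "cin (a + b) c = cin a c + cin b c"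
  and cin_diff_right: "cin a (b - c) = cin a b - cin a c"
  and cin_diff_left: "cin (a - b) c = cin a c - cin b c"
  and cin_neg_right: "cin a (- b) = - cin a b"
  and cin_neg_left: "cin (- a) b = - cin a b"
  and cin_smult_right: "cin a (k *s b) = k * cin a b"
  and cin_smult_left: "cin (k *s a) b = cnj k * cin a b"
  and cin_zero_right: "cin a 0 = 0" and cin_zero_left: "cin 0 a = 0"
  by (simp_all add: cin_def algebra_simps sum.distrib sum_subtractf sum_distrib_left sum_negf)

lemma cin_cnj: "cin b a = cnj (cin a b)"
  by (simp add: cin_def mult.commute)

lemma cin_self: "cin a a = complex_of_real (nsq a)"
proof -
  have "cnj (a$i) * a$i = complex_of_real ((cmod (a$i))^2)" for i
    using complex_norm_square[of "a$i"] by (simp add: mult.commute)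
  then show ?thesis by (simp add: cin_def nsq_def)
qed

lemma nsq_nonneg: "0 \<le> nsq a" by (simp add: nsq_def sum_nonneg)
lemma nsq_zero_iff: "nsq a = 0 \<longleftrightarrow> a = 0"
  by (simp add: nsq_def sum_nonneg_eq_0_iff vec_eq_iff)

lemma cin_adj_right: "cin a (adj M *v b) = cin (M *v a) b"
  by (simp add: cin_def adj_def matrix_vector_mult_def sum_distrib_left sum_distrib_right
      algebra_simps cnj_sum) (rule sum.swap)
lemma cin_adj_left: "cin (adj M *v a) b = cin a (M *v b)"
  by (metis cin_adj_right cin_cnj)

lemma cmat_smult_mv: "cmat_smult c A *v x = c *s (A *v x)"
  by (simp add: cmat_smult_def matrix_vector_mult_def vec_eq_iff sum_distrib_left mult.assoc)
lemma neg_mv: "(- (A::'a::comm_ring_1^'n^'m)) *v x = - (A *v x)"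
  by (simp add: matrix_vector_mult_def vec_eq_iff sum_negf[symmetric])
lemma zero_mv: "(0::'a::semiring_1^'n^'m) *v x = 0"
  by (simp add: matrix_vector_mult_def vec_eq_iff)
lemma block2_mv: "block2 A B C D *v x = cv (A *v lo x + B *v hi x) (C *v lo x + D *v hi x)"
  by (simp add: block2_def cv_def lo_def hi_def matrix_vector_mult_def vec_eq_iff sum_UNIV_plus split: sum.split)
lemma mv_cv: "M *v cv a b = cv (blk11 M *v a + blk12 M *v b) (blk21 M *v a + blk22 M *v b)"
  by (simp add: blk11_def blk12_def blk21_def blk22_def cv_def matrix_vector_mult_def vec_eq_iff sum_UNIV_plus split: sum.split)
lemma row2_mv: "row2 A B *v x = A *v lo x + B *v hi x"
  by (simp add: row2_def lo_def hi_def matrix_vector_mult_def vec_eq_iff sum_UNIV_plus)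
lemma col2_mv: "col2 A B *v x = cv (A *v x) (B *v x)"
  by (simp add: col2_def cv_def matrix_vector_mult_def vec_eq_iff split: sum.split)

lemma jmat_mv: "jmat *v x = cv (lo x) (- hi x)"
  by (simp add: jmat_def block2_mv neg_mv zero_mv)
lemma Jmat_mv: "Jmat *v x = cv (hi x) (lo x)"
  by (simp add: Jmat_def block2_mv neg_mv zero_mv)
lemma Kmat_mv: "Kmat *v x = (1 / complex_of_real (sqrt 2)) *s cv (lo x - hi x) (lo x + hi x)"
  by (simp add: Kmat_def block2_mv neg_mv cmat_smult_mv)

lemma adj_adj[simp]: "adj (adj A) = A" by (simp add: adj_def vec_eq_iff)
lemma adj_mult: "adj (A ** B) = adj B ** adj A"
  by (simp add: adj_def matrix_matrix_mult_def vec_eq_iff cnj_sum mult.commute)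
lemma adj_diff: "adj (A - B) = adj A - adj B" by (simp add: adj_def vec_eq_iff)
lemma adj_add: "adj (A + B) = adj A + adj B" by (simp add: adj_def vec_eq_iff)
lemma adj_neg: "adj (- A) = - adj A" by (simp add: adj_def vec_eq_iff)
lemma adj_zero: "adj 0 = 0" by (simp add: adj_def vec_eq_iff)
lemma adj_smult: "adj (cmat_smult c A) = cmat_smult (cnj c) (adj A)"
  by (simp add: adj_def cmat_smult_def vec_eq_iff)
lemma adj_mat1: "adj (mat 1) = mat 1" by (simp add: adj_def mat_def vec_eq_iff)
lemma adj_block2: "adj (block2 A B C D) = block2 (adj A) (adj C) (adj B) (adj D)"
  by (simp add: adj_def block2_def vec_eq_iff split: sum.split)
lemma adj_jmat: "adj jmat = jmat"
  by (simp add: jmat_def adj_block2 adj_mat1 adj_zero adj_neg)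
lemma adjK_eq: "adj Kmat = cmat_smult (1 / complex_of_real (sqrt 2)) (block2 (mat 1) (mat 1) (- mat 1) (mat 1))"
  unfolding Kmat_def adj_smult adj_block2 adj_mat1 adj_neg by simp
lemma adjK_mv: "adj Kmat *v x = (1 / complex_of_real (sqrt 2)) *s cv (lo x + hi x) (hi x - lo x)"
  by (simp only: adjK_eq cmat_smult_mv block2_mv neg_mv matrix_vector_mul_lid) (simp only: uminus_add_conv_diff)

lemma smult_mult_left: "cmat_smult c A ** B = cmat_smult c (A ** B)"
  by (simp add: cmat_smult_def matrix_matrix_mult_def vec_eq_iff sum_distrib_left mult.assoc)

lemma sqrt2_ss: "complex_of_real (sqrt 2) * complex_of_real (sqrt 2) = 2"
  by (simp flip: of_real_mult)
lemma sqrt2_sq: "(u / complex_of_real (sqrt 2) + v / complex_of_real (sqrt 2)) / complex_of_real (sqrt 2) = (u + v) / 2"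
   "(u / complex_of_real (sqrt 2) - v / complex_of_real (sqrt 2)) / complex_of_real (sqrt 2) = (u - v) / 2"
   "(- (u / complex_of_real (sqrt 2)) - v / complex_of_real (sqrt 2)) / complex_of_real (sqrt 2) = (- u - v) / 2"
  by (simp_all only: add_divide_distrib[symmetric] diff_divide_distrib[symmetric] divide_divide_eq_left sqrt2_ss
      minus_divide_left)

lemma jj: "jmat *v (jmat *v x) = x" by (simp add: jmat_mv)
lemma K_adjK: "Kmat *v (adj Kmat *v x) = x"
  by (simp add: Kmat_mv adjK_mv cv_def lo_def hi_def vec_eq_iff split: sum.split)
     (simp add: sqrt2_sq)
lemma adjK_K: "adj Kmat *v (Kmat *v x) = x"
  by (simp add: Kmat_mv adjK_mv cv_def lo_def hi_def vec_eq_iff split: sum.split)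
     (simp add: sqrt2_sq)
lemma K_j_adjK: "Kmat *v (jmat *v (adj Kmat *v x)) = Jmat *v x"
  by (simp add: Kmat_mv adjK_mv jmat_mv Jmat_mv cv_def lo_def hi_def vec_eq_iff split: sum.split)
     (simp add: sqrt2_sq)
lemma adjK_J_K: "adj Kmat *v (Jmat *v (Kmat *v x)) = jmat *v x"
  by (simp add: Kmat_mv adjK_mv jmat_mv Jmat_mv cv_def lo_def hi_def vec_eq_iff split: sum.split)
     (simp add: sqrt2_sq)

lemma cin_j_self: "cin x (jmat *v x) = complex_of_real (jf x)"
  by (simp add: jmat_mv cin_split[of x] cin_neg_right cin_self jf_def)
lemma cin_j_swap: "cin (jmat *v x) y = cin x (jmat *v y)"
  by (metis adj_jmat cin_adj_left)
lemma nsq_smult: "nsq (k *s x) = (cmod k)^2 * nsq x"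
  by (simp add: nsq_def sum_distrib_left norm_mult power_mult_distrib)
lemma jf_smult: "jf (k *s x) = (cmod k)^2 * jf x"
  by (simp add: jf_def nsq_smult algebra_simps)
lemma jf_j: "jf (jmat *v x) = jf x"
proof -
  have "nsq (- v) = nsq v" for v :: "complex^'a" by (simp add: nsq_def)
  then show ?thesis by (simp add: jf_def jmat_mv)
qed
lemma jf_cv: "jf (cv a b) = nsq a - nsq b" by (simp add: jf_def)

lemma sum_UNIV_option: "(\<Sum>b\<in>(UNIV::'a::finite option set). f b) = f None + (\<Sum>c\<in>UNIV. f (Some c))"
proof -
  have "(\<Sum>b\<in>(UNIV::'a option set). f b) = (\<Sum>b\<in>insert None (range Some). f b)"
    by (simp only: UNIV_option_conv)
  also have "\<dots> = f None + (\<Sum>b\<in>range Some. f b)" by (rule sum.insert) auto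
  also have "(\<Sum>b\<in>range Some. f b) = (\<Sum>c\<in>UNIV. f (Some c))" by (rule sum.reindex_cong[of Some]) auto
  finally show ?thesis .
qed

lemma card_option_fin: "CARD('a::finite option) = Suc CARD('a)"
proof -
  have "(UNIV::'a option set) = insert None (range Some)" by (rule UNIV_option_conv)
  then have "CARD('a option) = card (insert None (range (Some::'a \<Rightarrow> 'a option)))" by simp
  also have "\<dots> = Suc (card (range (Some::'a \<Rightarrow> 'a option)))" by (rule card_insert_disjoint) auto
  also have "card (range (Some::'a \<Rightarrow> 'a option)) = CARD('a)" by (rule card_image) auto
  finally show ?thesis .
qed

lemma ker_mat:
  fixes A :: "'a::field^'n^'m"
  assumes "CARD('m) < CARD('n)"
  shows "\<exists>x. x \<noteq> 0 \<and> A *v x = 0"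
proof (rule ccontr)
  assume "\<not> ?thesis"
  then have inj: "inj ((*v) A)"
    using matrix_left_invertible_ker matrix_left_invertible_injective by metis
  have "vec.dim ((*v) A ` UNIV) = vec.dim (UNIV::('a^'n) set)"
    by (rule vec.dim_image_eq[OF matrix_vector_mul_linear_gen]) (use inj in \<open>auto simp: inj_on_def\<close>)
  moreover have "vec.dim ((*v) A ` UNIV) \<le> CARD('m)"
    using vec.dim_subset_UNIV[of "(*v) A ` UNIV"] by (simp add: vec.dimension_def card_cart_basis)
  ultimately show False using assms vec_dim_card by (metis not_le)
qed

lemma ker_aug:
  fixes M :: "complex^'p^'p" and w :: "complex^'p"
  shows "\<exists>y t. (y \<noteq> 0 \<or> t \<noteq> 0) \<and> M *v y + t *s w = 0"
proof -
  define A :: "complex^('p option)^'p" where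
    "A = (\<chi> a b. case b of None \<Rightarrow> w$a | Some c \<Rightarrow> M$a$c)"
  obtain x where x: "x \<noteq> 0" "A *v x = 0"
    using ker_mat[of A] by (auto simp: card_option_fin)
  define y where "y = (\<chi> c. x $ Some c)"
  have "A *v x = M *v y + (x $ None) *s w"
    by (simp add: A_def y_def matrix_vector_mult_def vec_eq_iff sum_UNIV_option mult.commute)
  moreover have "y \<noteq> 0 \<or> x $ None \<noteq> 0"
  proof (rule ccontr)
    assume "\<not> ?thesis"
    then have "x $ b = 0" for b
      by (cases b) (auto simp: y_def vec_eq_iff)
    then show False using x(1) by (simp add: vec_eq_iff)
  qed
  ultimately show ?thesis using x(2) by metis
qed

lemma lo_mv: "lo (B *v y) = (\<chi> a c. B $ Inl a $ c) *v y"
  by (simp add: lo_def matrix_vector_mult_def vec_eq_iff)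
lemma hi_mv: "hi (B *v y) = (\<chi> a c. B $ Inr a $ c) *v y"
  by (simp add: hi_def matrix_vector_mult_def vec_eq_iff)

definition gam :: "(nat \<Rightarrow> complex^('p::finite + 'p)^'p) \<Rightarrow> nat \<Rightarrow> complex^('p + 'p)^'p" where
  "gam \<beta> k = \<beta> k ** Kmat"

lemma mv_smult: "A *v (c *s x) = (c::'a::comm_ring_1) *s (A *v x)"
  by (simp add: matrix_vector_mult_def vec_eq_iff sum_distrib_left algebra_simps)
lemma two_smult_diff: "(2::complex) *s v - v = v"
  by (simp add: vec_eq_iff)

lemma gjg:
  assumes bJ: "\<And>k. \<beta> k ** Jmat ** adj (\<beta> k) = mat 1"
  shows "gam \<beta> k *v (jmat *v (adj (gam \<beta> k) *v w)) = w"
proof -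
  have "gam \<beta> k *v (jmat *v (adj (gam \<beta> k) *v w)) = \<beta> k *v (Kmat *v (jmat *v (adj Kmat *v (adj (\<beta> k) *v w))))"
    by (simp add: gam_def adj_mult matrix_vector_mul_assoc[symmetric])
  also have "\<dots> = \<beta> k *v (Jmat *v (adj (\<beta> k) *v w))" by (simp add: K_j_adjK)
  also have "\<dots> = (\<beta> k ** Jmat ** adj (\<beta> k)) *v w" by (simp add: matrix_vector_mul_assoc[symmetric])
  also have "\<dots> = w" by (simp add: bJ)
  finally show ?thesis .
qed

lemma Cmat_mv: "Cmat \<beta> k *v x = 2 *s (adj (gam \<beta> k) *v (gam \<beta> k *v x)) - jmat *v x"
  by (simp add: Cmat_def gam_def matrix_vector_mult_diff_rdistrib cmat_smult_mv adj_mult matrix_vector_mul_assoc[symmetric])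

lemma adj_C: "adj (Cmat \<beta> k) = Cmat \<beta> k"
  unfolding Cmat_def adj_diff adj_smult adj_jmat adj_mult adj_adj
  by (simp add: matrix_mul_assoc)

lemma C_herm: "cin (Cmat \<beta> k *v x) y = cin x (Cmat \<beta> k *v y)"
  by (metis adj_C cin_adj_left)

lemma cinC: "cin x (Cmat \<beta> k *v x) = complex_of_real (2 * nsq (gam \<beta> k *v x) - jf x)"
  by (simp add: Cmat_mv cin_diff_right cin_smult_right cin_adj_right cin_self cin_j_self)

lemma CjC:
  assumes bJ: "\<And>k. \<beta> k ** Jmat ** adj (\<beta> k) = mat 1"
  shows "Cmat \<beta> k *v (jmat *v (Cmat \<beta> k *v x)) = jmat *v x"
proof -
  let ?g = "gam \<beta> k"
  have e1: "jmat *v (Cmat \<beta> k *v x) = 2 *s (jmat *v (adj ?g *v (?g *v x))) - x"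
    by (simp add: Cmat_mv matrix_vector_mult_diff_distrib mv_smult jj)
  have e2: "?g *v (jmat *v (Cmat \<beta> k *v x)) = ?g *v x"
    by (simp add: e1 matrix_vector_mult_diff_distrib mv_smult gjg[OF bJ] two_smult_diff)
  have "Cmat \<beta> k *v (jmat *v (Cmat \<beta> k *v x)) = 2 *s (adj ?g *v (?g *v x)) - Cmat \<beta> k *v x"
    by (simp only: Cmat_mv[of \<beta> k "jmat *v (Cmat \<beta> k *v x)"] e2 jj)
  also have "\<dots> = jmat *v x" by (simp add: Cmat_mv)
  finally show ?thesis .
qed

lemma KZ:
  fixes g :: "complex^('p::finite + 'p)^'p"
  assumes gjg: "\<And>w. g *v (jmat *v (adj g *v w)) = w" and gz: "g *v z = 0"
  shows "jf z \<le> 0"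
proof (rule ccontr)
  assume pos: "\<not> jf z \<le> 0"
  define M :: "complex^'p^'p" where "M = (\<chi> a c. (jmat ** adj g) $ Inl a $ c)"
  obtain y t where yt: "y \<noteq> 0 \<or> t \<noteq> 0" "M *v y + t *s lo z = 0"
    using ker_aug[of M "lo z"] by blast
  define u where "u = jmat *v (adj g *v y) + t *s z"
  have "lo u = M *v y + t *s lo z"
    by (simp add: u_def M_def lo_mv matrix_vector_mul_assoc)
  then have lou: "lo u = 0" using yt by simp
  have "jf u = - nsq (hi u)" by (simp add: jf_def lou nsq_def)
  then have le: "jf u \<le> 0" using nsq_nonneg[of "hi u"] by simp
  have ju: "jmat *v u = adj g *v y + t *s (jmat *v z)"
    by (simp add: u_def matrix_vector_right_distrib mv_smult jj)
  have c1: "cin (jmat *v (adj g *v y)) (adj g *v y) = complex_of_real (nsq y)"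
    by (simp add: cin_j_swap cin_adj_left gjg cin_self)
  have c2: "cin (jmat *v (adj g *v y)) (jmat *v z) = 0"
    by (simp add: cin_j_swap jj cin_adj_left gz cin_zero_right)
  have c3: "cin z (adj g *v y) = 0"
    by (simp add: cin_adj_right gz cin_zero_left)
  have "cin u (jmat *v u) = complex_of_real (nsq y) + cnj t * t * complex_of_real (jf z)"
    unfolding ju by (simp add: u_def cin_add_left cin_add_right cin_smult_left cin_smult_right c1 c2 c3 cin_j_self)
  moreover have "cnj t * t = complex_of_real ((cmod t)^2)"
    using complex_norm_square[of t] by (simp add: mult.commute)
  ultimately have "jf u = nsq y + (cmod t)^2 * jf z"
    using cin_j_self[of u] by (metis of_real_add of_real_eq_iff of_real_mult)
  moreover have "nsq y + (cmod t)^2 * jf z > 0"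
  proof (cases "y = 0")
    case True
    then have "t \<noteq> 0" using yt by simp
    then show ?thesis using pos True by (simp add: nsq_def)
  next
    case False
    then have "nsq y > 0" using nsq_nonneg[of y] nsq_zero_iff[of y] by simp
    then show ?thesis using pos by (simp add: add_pos_nonneg)
  qed
  ultimately show False using le by simp
qed

lemma KL:
  fixes g :: "complex^('p::finite + 'p)^'p"
  assumes gjg: "\<And>w. g *v (jmat *v (adj g *v w)) = w"
  shows "jf x \<le> nsq (g *v x)"
proof -
  define y where "y = g *v x"
  define z where "z = x - jmat *v (adj g *v y)"
  have gz: "g *v z = 0" by (simp add: z_def matrix_vector_mult_diff_distrib gjg y_def)
  have xe: "x = jmat *v (adj g *v y) + z" by (simp add: z_def)
  have jx: "jmat *v x = adj g *v y + jmat *v z"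
    by (subst xe) (simp add: matrix_vector_right_distrib jj)
  have c1: "cin (jmat *v (adj g *v y)) (adj g *v y) = complex_of_real (nsq y)"
    by (simp add: cin_j_swap cin_adj_left gjg cin_self)
  have c2: "cin (jmat *v (adj g *v y)) (jmat *v z) = 0"
    by (simp add: cin_j_swap jj cin_adj_left gz cin_zero_right)
  have c3: "cin z (adj g *v y) = 0"
    by (simp add: cin_adj_right gz cin_zero_left)
  have "cin x (jmat *v x) = complex_of_real (nsq y) + complex_of_real (jf z)"
    unfolding jx by (subst xe) (simp add: cin_add_left cin_add_right c1 c2 c3 cin_j_self)
  then have "jf x = nsq y + jf z" using cin_j_self[of x] by (metis of_real_add of_real_eq_iff)
  then show ?thesis using KZ[OF gjg gz] y_def by simp
qed

definition eps :: "complex \<Rightarrow> real" where "eps z = - 2 * Im z / ((cmod z)^2 + 1)"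
definition Qc :: "(nat \<Rightarrow> complex^('p::finite + 'p)^'p) \<Rightarrow> nat \<Rightarrow> complex^('p + 'p) \<Rightarrow> real" where
  "Qc \<beta> k v = 2 * nsq (gam \<beta> k *v v) - jf v"
definition tt where "tt \<beta> z k u = qfun z ^ k * Qc \<beta> k (Wsol \<beta> k z *v u)"
definition hh where "hh \<beta> z n u = qfun z ^ n * jf (Wsol \<beta> n z *v u)"

lemma W_step: "Wsol \<beta> (Suc k) z *v x = Wsol \<beta> k z *v x - (\<i>/z) *s (jmat *v (Cmat \<beta> k *v (Wsol \<beta> k z *v x)))"
  by (simp add: matrix_vector_mult_diff_rdistrib cmat_smult_mv matrix_vector_mul_assoc[symmetric])

lemma cinC': "cin x (Cmat \<beta> k *v x) = complex_of_real (Qc \<beta> k x)"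
  by (simp add: cinC Qc_def)

lemma step_form:
  assumes bJ: "\<And>k. \<beta> k ** Jmat ** adj (\<beta> k) = mat 1" and z: "z \<noteq> 0"
  shows "qfun z * jf (x - (\<i>/z) *s (jmat *v (Cmat \<beta> k *v x))) = jf x + eps z * Qc \<beta> k x"
proof -
  define a where "a = \<i>/z"
  define y where "y = Cmat \<beta> k *v x"
  have jA: "jmat *v (x - a *s (jmat *v y)) = jmat *v x - a *s y"
    by (simp add: matrix_vector_mult_diff_distrib mv_smult jj)
  have c1: "cin (jmat *v y) (jmat *v x) = cin x (Cmat \<beta> k *v x)"
    by (simp add: cin_j_swap jj y_def C_herm)
  have c2: "cin (jmat *v y) y = cin x (jmat *v x)"
    by (simp add: cin_j_swap y_def C_herm CjC[OF bJ])
  have "cin (x - a *s (jmat *v y)) (jmat *v (x - a *s (jmat *v y)))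
      = cin x (jmat *v x) - a * cin x y - cnj a * cin (jmat *v y) (jmat *v x) + cnj a * a * cin (jmat *v y) y"
    unfolding jA by (simp add: cin_diff_left cin_diff_right cin_smult_left cin_smult_right algebra_simps)
  also have "\<dots> = (1 + cnj a * a) * cin x (jmat *v x) - (a + cnj a) * cin x (Cmat \<beta> k *v x)"
    by (simp only: c1 c2) (simp add: y_def algebra_simps)
  finally have e: "complex_of_real (jf (x - a *s (jmat *v y))) =
      (1 + cnj a * a) * complex_of_real (jf x) - (a + cnj a) * complex_of_real (Qc \<beta> k x)"
    by (simp add: cin_j_self cinC')
  have aa0: "cnj a * a = complex_of_real ((cmod a)^2)"
    using complex_norm_square[of a] by (simp only: mult.commute)
  have ca: "cmod a = 1 / cmod z" by (simp add: a_def norm_divide)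
  have aa: "cnj a * a = complex_of_real (1 / (cmod z)^2)"
    unfolding aa0 ca by (simp add: power_one_over)
  have ra0: "a + cnj a = complex_of_real (2 * Re a)" by (rule complex_add_cnj)
  have rea: "Re a = Im z / (cmod z)^2" by (simp add: a_def Re_divide cmod_power2)
  have ra: "a + cnj a = complex_of_real (2 * Im z / (cmod z)^2)"
    unfolding ra0 rea by simp
  have e2: "jf (x - a *s (jmat *v y)) = (1 + 1 / (cmod z)^2) * jf x - (2 * Im z / (cmod z)^2) * Qc \<beta> k x"
    using e unfolding aa ra by (metis of_real_1 of_real_add of_real_diff of_real_eq_iff of_real_mult)
  have n: "(cmod z)^2 > 0" using z by simp
  have ar: "n/(n+1) * ((1 + 1/n) * J - (2*m/n) * Q) = J + (- 2*m/(n+1)) * Q" if "n > (0::real)" for n m J Q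
  proof -
    have nn1: "n * n > 0" using that by simp
    have nn: "n + n * n \<noteq> 0" "n \<noteq> 0" "n + 1 \<noteq> 0" using that nn1 by linarith+
    have h1: "n/(n+1) * (1 + 1/n) = 1" using nn by (simp add: field_simps)
    have "n/(n+1) * (2*m/n) = (n * (2*m)) / ((n+1) * n)" by (rule times_divide_times_eq)
    also have "\<dots> = (2*m) / (n+1)" using nn(2) by (metis mult.commute nonzero_mult_divide_mult_cancel_right)
    finally have h2: "n/(n+1) * (2*m/n) = 2*m/(n+1)" .
    have "n/(n+1) * ((1 + 1/n) * J - (2*m/n) * Q) = (n/(n+1) * (1 + 1/n)) * J - (n/(n+1) * (2*m/n)) * Q"
      by (simp only: right_diff_distrib mult.assoc)
    also have "\<dots> = J - (2*m/(n+1)) * Q" by (simp only: h1 h2 mult_1)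
    finally show ?thesis by simp
  qed
  show ?thesis
    unfolding a_def[symmetric] y_def[symmetric] e2 qfun_def eps_def
    using ar[OF n] by simp
qed

lemma qfun_pos: "z \<noteq> 0 \<Longrightarrow> qfun z > 0" unfolding qfun_def by (intro divide_pos_pos) (simp_all add: add_nonneg_pos)
lemma eps_pos: "Im z < 0 \<Longrightarrow> eps z > 0" unfolding eps_def by (intro divide_pos_pos) (simp_all add: add_nonneg_pos)

lemma Qc_ge:
  assumes bJ: "\<And>k. \<beta> k ** Jmat ** adj (\<beta> k) = mat 1"
  shows "jf v \<le> Qc \<beta> k v" and "0 \<le> Qc \<beta> k v"
  using KL[of "gam \<beta> k" v, OF gjg[OF bJ]] nsq_nonneg[of "gam \<beta> k *v v"] by (simp_all add: Qc_def)

lemma hh_step: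
  assumes bJ: "\<And>k. \<beta> k ** Jmat ** adj (\<beta> k) = mat 1" and z: "z \<noteq> 0"
  shows "hh \<beta> z (Suc n) u = hh \<beta> z n u + eps z * tt \<beta> z n u"
proof -
  have "hh \<beta> z (Suc n) u = qfun z ^ n * (qfun z * jf (Wsol \<beta> (Suc n) z *v u))"
    by (simp add: hh_def)
  also have "\<dots> = qfun z ^ n * (jf (Wsol \<beta> n z *v u) + eps z * Qc \<beta> n (Wsol \<beta> n z *v u))"
    by (simp only: W_step step_form[OF bJ z])
  finally show ?thesis by (simp add: hh_def tt_def algebra_simps)
qed

lemma hh_sum:
  assumes bJ: "\<And>k. \<beta> k ** Jmat ** adj (\<beta> k) = mat 1" and z: "z \<noteq> 0"
  shows "hh \<beta> z n u = jf u + eps z * (\<Sum>k<n. tt \<beta> z k u)"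
proof (induction n)
  case 0 show ?case by (simp add: hh_def)
next
  case (Suc n) show ?case unfolding hh_step[OF bJ z] Suc.IH by (simp add: algebra_simps)
qed

lemma tt_ge:
  assumes bJ: "\<And>k. \<beta> k ** Jmat ** adj (\<beta> k) = mat 1" and z: "z \<noteq> 0"
  shows "hh \<beta> z k u \<le> tt \<beta> z k u" "0 \<le> tt \<beta> z k u"
  using Qc_ge[OF bJ, where v="Wsol \<beta> k z *v u" and k=k] qfun_pos[OF z]
  by (simp_all add: hh_def tt_def mult_left_mono)

lemma growth:
  assumes bJ: "\<And>k. \<beta> k ** Jmat ** adj (\<beta> k) = mat 1" and z: "Im z < 0"
    and B: "\<And>n. (\<Sum>k<n. tt \<beta> z k u) \<le> B"
  shows "jf u \<le> 0"
proof (rule ccontr)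
  assume pos: "\<not> jf u \<le> 0"
  have z0: "z \<noteq> 0" using z by auto
  have e: "eps z > 0" using eps_pos[OF z] .
  have ind: "hh \<beta> z n u \<ge> (1 + eps z)^n * jf u" for n
  proof (induction n)
    case 0 then show ?case by (simp add: hh_def)
  next
    case (Suc n)
    have "hh \<beta> z (Suc n) u \<ge> hh \<beta> z n u + eps z * hh \<beta> z n u"
      using hh_step[OF bJ z0, where n=n and u=u] tt_ge(1)[OF bJ z0, where k=n and u=u] e
      by (simp add: mult_left_mono)
    also have "hh \<beta> z n u + eps z * hh \<beta> z n u = (1 + eps z) * hh \<beta> z n u" by (simp add: algebra_simps)
    finally have a: "(1 + eps z) * hh \<beta> z n u \<le> hh \<beta> z (Suc n) u" .
    have "(1 + eps z) * ((1 + eps z)^n * jf u) \<le> (1 + eps z) * hh \<beta> z n u"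
      by (rule mult_left_mono[OF Suc.IH]) (use e in simp)
    then show ?case using a by (simp add: mult.assoc)
  qed
  have up: "hh \<beta> z n u \<le> jf u + eps z * B" for n
    using hh_sum[OF bJ z0, where n=n and u=u] B[of n] e by (simp add: mult_left_mono)
  obtain n where n: "(jf u + eps z * B) / jf u < (1 + eps z)^n"
    using real_arch_pow[of "1 + eps z" "(jf u + eps z * B) / jf u"] e by auto
  then have "jf u + eps z * B < (1 + eps z)^n * jf u" using pos by (simp add: field_simps)
  then show False using ind[of n] up[of n] by simp
qed

definition vv :: "complex^'p^'p \<Rightarrow> complex^'p \<Rightarrow> complex^('p::finite + 'p)" where
  "vv \<Phi> y = adj Kmat *v cv ((-\<i>) *s (\<Phi> *v y)) y"

lemma vv_eq: "vv \<Phi> y = (adj Kmat ** col2 (cmat_smult (-\<i>) \<Phi>) (mat 1)) *v y"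
  by (simp add: vv_def col2_mv cmat_smult_mv matrix_vector_mul_assoc[symmetric])

lemma ring4: "(w1::complex) + (w2 + (w3 + (w4 + (w1 - w3 - (w2 - w4))))) = 2*w1 + 2*w4" by simp

lemma Qc_lin: "Qc \<beta> k (a + b) + Qc \<beta> k (a - b) = 2 * Qc \<beta> k a + 2 * Qc \<beta> k b"
proof -
  let ?C = "Cmat \<beta> k"
  have "cin (a + b) (?C *v (a + b)) + cin (a - b) (?C *v (a - b)) = 2 * cin a (?C *v a) + 2 * cin b (?C *v b)"
    apply (simp only: matrix_vector_right_distrib matrix_vector_mult_diff_distrib cin_add_left cin_add_right
        cin_diff_left cin_diff_right add_ac)
    by (rule ring4)
  then have "complex_of_real (Qc \<beta> k (a + b) + Qc \<beta> k (a - b)) = complex_of_real (2 * Qc \<beta> k a + 2 * Qc \<beta> k b)"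
    unfolding cinC' by simp
  then show ?thesis by (simp only: of_real_eq_iff)
qed

lemma Qc_smult: "Qc \<beta> k (c *s v) = (cmod c)^2 * Qc \<beta> k v"
  by (simp add: Qc_def mv_smult nsq_smult jf_smult algebra_simps)

lemma tt_add:
  assumes bJ: "\<And>k. \<beta> k ** Jmat ** adj (\<beta> k) = mat 1" and z: "z \<noteq> 0"
  shows "tt \<beta> z k (a + b) \<le> 2 * tt \<beta> z k a + 2 * tt \<beta> z k b"
proof -
  let ?W = "Wsol \<beta> k z"
  have "Qc \<beta> k (?W *v a + ?W *v b) \<le> 2 * Qc \<beta> k (?W *v a) + 2 * Qc \<beta> k (?W *v b)"
    using Qc_lin[of \<beta> k "?W *v a" "?W *v b"] Qc_ge(2)[where \<beta>=\<beta>, OF bJ, where v="?W *v a - ?W *v b" and k=k] by linarith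
  then have "qfun z ^ k * Qc \<beta> k (?W *v a + ?W *v b) \<le> qfun z ^ k * (2 * Qc \<beta> k (?W *v a) + 2 * Qc \<beta> k (?W *v b))"
    using qfun_pos[OF z] by (simp add: mult_left_mono)
  then show ?thesis by (simp add: tt_def matrix_vector_right_distrib algebra_simps)
qed

lemma tt_smult: "tt \<beta> z k (c *s u) = (cmod c)^2 * tt \<beta> z k u"
  by (simp add: tt_def mv_smult Qc_smult algebra_simps)

lemma uniq_pt:
  assumes bJ: "\<And>k. \<beta> k ** Jmat ** adj (\<beta> k) = mat 1" and z: "Im z < 0"
    and B1: "\<And>y. \<exists>B. \<forall>n. (\<Sum>k<n. tt \<beta> z k (vv \<Phi>1 y)) \<le> B"
    and B2: "\<And>y. \<exists>B. \<forall>n. (\<Sum>k<n. tt \<beta> z k (vv \<Phi>2 y)) \<le> B"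
  shows "\<Phi>1 = \<Phi>2"
proof (rule ccontr)
  assume ne: "\<Phi>1 \<noteq> \<Phi>2"
  then obtain x where x: "\<Phi>1 *v x \<noteq> \<Phi>2 *v x" using matrix_eq by metis
  have z0: "z \<noteq> 0" using z by auto
  define G where "G = adj Kmat ** col2 (cmat_smult (-\<i>) \<Phi>1) (mat 1)"
  obtain y t where yt: "y \<noteq> 0 \<or> t \<noteq> 0" "(\<chi> a c. G $ Inr a $ c) *v y + t *s hi (vv \<Phi>2 x) = 0"
    using ker_aug by blast
  define u where "u = vv \<Phi>1 y + t *s vv \<Phi>2 x"
  have hu: "hi u = 0" using yt(2) by (simp add: u_def vv_eq[of \<Phi>1] G_def[symmetric] hi_mv)
  obtain b1 where b1: "\<And>n. (\<Sum>k<n. tt \<beta> z k (vv \<Phi>1 y)) \<le> b1" using B1 by blast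
  obtain b2 where b2: "\<And>n. (\<Sum>k<n. tt \<beta> z k (vv \<Phi>2 x)) \<le> b2" using B2 by blast
  have "(\<Sum>k<n. tt \<beta> z k u) \<le> 2 * b1 + 2 * (cmod t)^2 * b2" for n
  proof -
    have "(\<Sum>k<n. tt \<beta> z k u) \<le> (\<Sum>k<n. 2 * tt \<beta> z k (vv \<Phi>1 y) + 2 * ((cmod t)^2 * tt \<beta> z k (vv \<Phi>2 x)))"
      unfolding u_def by (rule sum_mono) (use tt_add[where \<beta>=\<beta>, OF bJ z0] tt_smult in metis)
    also have "\<dots> = 2 * (\<Sum>k<n. tt \<beta> z k (vv \<Phi>1 y)) + 2 * (cmod t)^2 * (\<Sum>k<n. tt \<beta> z k (vv \<Phi>2 x))"
      by (simp add: sum.distrib sum_distrib_left mult.assoc)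
    also have "\<dots> \<le> 2 * b1 + 2 * (cmod t)^2 * b2"
      using b1[of n] b2[of n] by (intro add_mono mult_left_mono) auto
    finally show ?thesis .
  qed
  then have "jf u \<le> 0" by (intro growth[where \<beta>=\<beta>, OF bJ z]) 
  then have "nsq (lo u) \<le> 0" by (simp add: jf_def hu nsq_def)
  then have "lo u = 0" using nsq_nonneg nsq_zero_iff by (metis order_antisym)
  then have u0: "u = 0" using hu by (metis cv_lo_hi cv_zero_iff)
  have "Kmat *v u = cv ((-\<i>) *s (\<Phi>1 *v y) + t *s ((-\<i>) *s (\<Phi>2 *v x))) (y + t *s x)"
    by (simp add: u_def vv_def matrix_vector_right_distrib mv_smult K_adjK cv_smult cv_add)
  then have e: "(-\<i>) *s (\<Phi>1 *v y) + t *s ((-\<i>) *s (\<Phi>2 *v x)) = 0" "y + t *s x = 0"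
    using u0 by (simp_all add: cv_zero_iff)
  then have ey: "y = (-t) *s x" by (simp add: vec_eq_iff add_eq_0_iff)
  then have "\<Phi>1 *v y = (-t) *s (\<Phi>1 *v x)" by (simp only: mv_smult)
  with e(1) have "\<forall>a. \<i> * t * ((\<Phi>1 *v x) $ a - (\<Phi>2 *v x) $ a) = 0"
    by (simp add: vec_eq_iff algebra_simps)
  moreover obtain a where "(\<Phi>1 *v x) $ a \<noteq> (\<Phi>2 *v x) $ a" using x by (auto simp: vec_eq_iff)
  ultimately have "t = 0" by auto
  then have "y = 0" using ey by simp
  then show False using yt(1) \<open>t = 0\<close> by simp
qed

definition Smat where
  "Smat \<beta> z \<Phi> k = row2 (cmat_smult \<i> (adj \<Phi>)) (mat 1) **
        ((qfun z ^ k) *\<^sub>R (Kmat ** adj (Wsol \<beta> k z) ** Cmat \<beta> k ** Wsol \<beta> k z ** adj Kmat)) **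
        col2 (cmat_smult (-\<i>) \<Phi>) (mat 1)"

lemma adj_col2: "adj (col2 A B) = row2 (adj A) (adj B)"
  by (simp add: adj_def col2_def row2_def vec_eq_iff split: sum.split)

lemma scaleR_mv: "((r::real) *\<^sub>R (M::complex^'n^'m)) *v x = r *\<^sub>R (M *v x)"
  by (simp add: matrix_vector_mult_def vec_eq_iff scaleR_sum_right)

lemma cin_scaleR_right: "cin a (r *\<^sub>R b) = complex_of_real r * cin a b"
  unfolding cin_def vector_scaleR_component by (simp add: scaleR_conv_of_real sum_distrib_left algebra_simps)

lemma cin_mv_right: "cin a (M *v b) = cin (adj M *v a) b"
  by (metis adj_adj cin_adj_right)

lemma bridge: "cin y (Smat \<beta> z \<Phi> k *v y) = complex_of_real (tt \<beta> z k (vv \<Phi> y))"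
proof -
  let ?G = "col2 (cmat_smult (-\<i>) \<Phi>) (mat 1)"
  have r: "row2 (cmat_smult \<i> (adj \<Phi>)) (mat 1) = adj ?G"
    by (simp add: adj_col2 adj_smult adj_mat1)
  have v: "vv \<Phi> y = adj Kmat *v (?G *v y)"
    by (simp add: vv_def col2_mv cmat_smult_mv)
  show ?thesis
    unfolding Smat_def r
    by (simp add: matrix_vector_mul_assoc[symmetric] cin_adj_right scaleR_mv cin_scaleR_right
        cin_mv_right[of _ Kmat] v[symmetric] tt_def cinC')
qed

lemma summable_cin:
  fixes f :: "nat \<Rightarrow> complex^'n^'n"
  assumes "summable f"
  shows "summable (\<lambda>k. cin y (f k *v y))"
proof -
  have e: "summable (\<lambda>k. f k $ i $ j)" for i j
  proof -
    have "summable (\<lambda>k. f k $ i)"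
      using bounded_linear.summable[OF bounded_linear_vec_nth assms] .
    then show ?thesis using bounded_linear.summable[OF bounded_linear_vec_nth] by blast
  qed
  show ?thesis
    unfolding cin_def matrix_vector_mult_def
    by (simp add: sum_distrib_left) (intro summable_sum summable_mult summable_mult2 e)
qed

lemma summable_mat:
  fixes f :: "nat \<Rightarrow> complex^'n^'m"
  assumes "\<And>a b. summable (\<lambda>k. f k $ a $ b)"
  shows "summable f"
proof -
  define s where "s = (\<chi> a b. suminf (\<lambda>k. f k $ a $ b))"
  have "f sums s"
    unfolding sums_def
  proof (intro vec_tendstoI)
    fix a b
    show "((\<lambda>n. (\<Sum>k<n. f k) $ a $ b) \<longlongrightarrow> s $ a $ b) sequentially"
      using summable_LIMSEQ[OF assms[of a b]] by (simp add: s_def)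
  qed
  then show ?thesis by (auto simp: summable_def)
qed

lemma mv_axis: "(M *v axis b (1::complex)) $ i = M $ i $ b"
proof -
  have "(M *v axis b (1::complex)) $ i = (\<Sum>j\<in>UNIV. if j = b then M $ i $ j else 0)"
    unfolding matrix_vector_mult_def axis_def vec_lambda_beta by (rule sum.cong) auto
  then show ?thesis by simp
qed
lemma cin_axis: "cin (axis a 1) (M *v axis b 1) = M $ a $ b"
proof -
  have "cin (axis a 1) (M *v axis b 1) = (\<Sum>i\<in>UNIV. if i = a then M $ i $ b else 0)"
    unfolding cin_def mv_axis by (rule sum.cong) (auto simp: axis_def)
  then show ?thesis by simp
qed

lemma polar:
  fixes M :: "complex^'n^'n"
  shows "M $ a $ b = (cin (axis a 1 + axis b 1) (M *v (axis a 1 + axis b 1)) - cin (axis a 1) (M *v axis a 1)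
      - cin (axis b 1) (M *v axis b 1) - \<i> * (cin (axis a 1 + \<i> *s axis b 1) (M *v (axis a 1 + \<i> *s axis b 1))
      - cin (axis a 1) (M *v axis a 1) - cin (axis b 1) (M *v axis b 1))) / 2"
proof -
  have h1: "cin (axis a 1 + axis b 1) (M *v (axis a 1 + axis b 1)) = M$a$a + M$a$b + M$b$a + M$b$b"
    by (simp only: matrix_vector_right_distrib cin_add_left cin_add_right cin_axis add_ac)
  have h2: "cin (axis a 1 + \<i> *s axis b 1) (M *v (axis a 1 + \<i> *s axis b 1)) = M$a$a + \<i> * M$a$b - \<i> * M$b$a + M$b$b"
    by (simp add: matrix_vector_right_distrib cin_add_left cin_add_right cin_smult_left cin_smult_right mv_smult cin_axis algebra_simps)
  show ?thesis unfolding h1 h2 cin_axis by (simp add: field_simps)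
qed

lemma summable_from_forms:
  fixes f :: "nat \<Rightarrow> complex^'n^'n"
  assumes T: "\<And>y k. cin y (f k *v y) = complex_of_real (T y k)"
    and nn: "\<And>y k. 0 \<le> T y k"
    and bd: "\<And>y. \<exists>B. \<forall>n. (\<Sum>k<n. T y k) \<le> B"
  shows "summable f"
proof (rule summable_mat)
  have sy: "summable (\<lambda>k. cin y (f k *v y))" for y
  proof -
    obtain B where "\<forall>n. (\<Sum>k<n. T y k) \<le> B" using bd by blast
    then have "summable (T y)" by (intro summableI_nonneg_bounded[where x=B]) (auto intro: nn)
    then show ?thesis unfolding T by simp
  qed
  fix a b
  show "summable (\<lambda>k. f k $ a $ b)"
    by (subst polar) (intro summable_divide summable_diff summable_mult sy)
qed

lemma bounded_from_summable:
  fixes f :: "nat \<Rightarrow> complex^'n^'n"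
  assumes S: "summable f" and T: "\<And>k. cin y (f k *v y) = complex_of_real (T k)" and nn: "\<And>k. 0 \<le> T k"
  shows "\<exists>B. \<forall>n. (\<Sum>k<n. T k) \<le> B"
proof -
  have "summable T" using summable_cin[OF S, of y] unfolding T by simp
  then show ?thesis using sum_le_suminf nn by blast
qed

lemma minv_right: "invertible A \<Longrightarrow> A ** matrix_inv A = mat 1"
  unfolding invertible_def matrix_inv_def by (metis (mono_tags, lifting) someI_ex)

lemma adjW_step: "adj (Wsol \<beta> (Suc n) \<mu>) *v c =
   adj (Wsol \<beta> n \<mu>) *v (c - cnj (\<i>/\<mu>) *s (Cmat \<beta> n *v (jmat *v c)))"
  by (simp add: adj_diff adj_smult adj_mult adj_C adj_jmat matrix_vector_mult_diff_rdistrib cmat_smult_mv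
      matrix_vector_mul_assoc[symmetric] matrix_vector_mult_diff_distrib matrix_vector_right_distrib mv_smult)

lemma WJW:
  assumes bJ: "\<And>k. \<beta> k ** Jmat ** adj (\<beta> k) = mat 1" and w: "w \<noteq> 0"
  shows "Wsol \<beta> n w *v (jmat *v (adj (Wsol \<beta> n (cnj w)) *v c)) = (1 + 1/w^2)^n *s (jmat *v c)"
proof (induction n arbitrary: c)
  case 0
  show ?case by (simp add: adj_mat1)
next
  case (Suc n)
  define a where "a = \<i>/w"
  define s where "s = (1 + 1/w^2)^n"
  define P where "P = jmat *v c"
  define Qv where "Qv = jmat *v (Cmat \<beta> n *v P)"
  define b where "b = c + a *s (Cmat \<beta> n *v (jmat *v c))"
  have ca: "cnj (\<i> / cnj w) = - a" by (simp add: a_def)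
  have bb: "c - cnj (\<i> / cnj w) *s (Cmat \<beta> n *v (jmat *v c)) = b"
    unfolding ca b_def by (simp add: vec_eq_iff)
  have jb: "jmat *v b = P + a *s Qv"
    by (simp add: b_def P_def Qv_def matrix_vector_right_distrib mv_smult)
  have jCjb: "jmat *v (Cmat \<beta> n *v (P + a *s Qv)) = Qv + a *s P"
    by (simp add: Qv_def P_def matrix_vector_right_distrib mv_smult CjC[OF bJ] jj)
  have "Wsol \<beta> (Suc n) w *v (jmat *v (adj (Wsol \<beta> (Suc n) (cnj w)) *v c))
      = Wsol \<beta> n w *v (jmat *v (adj (Wsol \<beta> n (cnj w)) *v b))
        - a *s (jmat *v (Cmat \<beta> n *v (Wsol \<beta> n w *v (jmat *v (adj (Wsol \<beta> n (cnj w)) *v b)))))"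
    unfolding adjW_step bb W_step a_def ..
  also have "\<dots> = s *s (P + a *s Qv) - a *s (s *s (Qv + a *s P))"
    unfolding Suc.IH s_def[symmetric] by (simp only: mv_smult jb jCjb)
  also have "\<dots> = (s * (1 + 1/w^2)) *s P"
  proof -
    have aa: "1 + 1/w^2 = 1 - a * a"
      using w by (simp add: a_def field_simps power2_eq_square)
    show ?thesis by (simp add: vec_eq_iff) (simp add: aa algebra_simps)
  qed
  finally show ?case by (simp add: s_def P_def mult.commute)
qed

lemma ncal_pt:
  assumes bJ: "\<And>k. \<beta> k ** Jmat ** adj (\<beta> k) = mat 1" and w: "w \<noteq> 0"
    and le: "loewner_le (adj R ** R) (adj Q ** Q)"
    and inv: "invertible (blk11 (Wcal \<beta> N w) ** R + blk12 (Wcal \<beta> N w) ** Q)"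
    and phi: "\<Phi> = cmat_smult \<i> ((blk21 (Wcal \<beta> N w) ** R + blk22 (Wcal \<beta> N w) ** Q) **
                    matrix_inv (blk11 (Wcal \<beta> N w) ** R + blk12 (Wcal \<beta> N w) ** Q))"
  shows "jf (Wsol \<beta> (Suc N) w *v vv \<Phi> y) \<le> 0"
proof -
  let ?Wc = "Wcal \<beta> N w"
  define X where "X = blk11 ?Wc ** R + blk12 ?Wc ** Q"
  define Y where "Y = blk21 ?Wc ** R + blk22 ?Wc ** Q"
  define \<xi> where "\<xi> = matrix_inv X *v y"
  define c where "c = cv (R *v \<xi>) (Q *v \<xi>)"
  have Xxi: "X *v \<xi> = y" unfolding \<xi>_def matrix_vector_mul_assoc minv_right[OF inv[folded X_def]] by simp
  have Py: "(-\<i>) *s (\<Phi> *v y) = Y *v \<xi>"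
    unfolding phi X_def[symmetric] Y_def[symmetric] \<xi>_def
    by (simp add: cmat_smult_mv matrix_vector_mul_assoc[symmetric] vec_eq_iff)
  have Wcc: "?Wc *v c = cv (X *v \<xi>) (Y *v \<xi>)"
    by (simp add: c_def mv_cv X_def Y_def matrix_vector_mult_add_rdistrib matrix_vector_mul_assoc[symmetric])
  have "vv \<Phi> y = adj Kmat *v (Jmat *v (?Wc *v c))"
    unfolding vv_def Py Wcc Jmat_mv Xxi by simp
  also have "\<dots> = jmat *v (adj (Wsol \<beta> (Suc N) (cnj w)) *v c)"
    by (simp add: Wcal_def matrix_vector_mul_assoc[symmetric] adjK_J_K)
  finally have vvj: "vv \<Phi> y = jmat *v (adj (Wsol \<beta> (Suc N) (cnj w)) *v c)" .
  have "Wsol \<beta> (Suc N) w *v vv \<Phi> y = (1 + 1/w^2)^(Suc N) *s (jmat *v c)"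
    unfolding vvj by (rule WJW[where \<beta>=\<beta>, OF bJ w])
  then have e: "jf (Wsol \<beta> (Suc N) w *v vv \<Phi> y) = (cmod ((1 + 1/w^2)^(Suc N)))^2 * (nsq (R *v \<xi>) - nsq (Q *v \<xi>))"
    by (simp add: jf_smult jf_j c_def jf_cv)
  have "0 \<le> Re (\<Sum>i\<in>UNIV. cnj (\<xi> $ i) * ((adj Q ** Q - adj R ** R) *v \<xi>) $ i)"
    using le unfolding loewner_le_def psd_def by blast
  moreover have "(\<Sum>i\<in>UNIV. cnj (\<xi> $ i) * ((adj Q ** Q - adj R ** R) *v \<xi>) $ i)
      = cin \<xi> ((adj Q ** Q - adj R ** R) *v \<xi>)" unfolding cin_def ..
  moreover have "cin \<xi> ((adj Q ** Q - adj R ** R) *v \<xi>) = complex_of_real (nsq (Q *v \<xi>) - nsq (R *v \<xi>))"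
    by (simp add: matrix_vector_mult_diff_rdistrib matrix_vector_mul_assoc[symmetric]
        cin_diff_right cin_adj_right cin_self)
  ultimately have "nsq (R *v \<xi>) \<le> nsq (Q *v \<xi>)" by simp
  then show ?thesis unfolding e by (simp add: mult_nonneg_nonpos)
qed

lemma cont_mv:
  fixes A :: "'z::topological_space \<Rightarrow> complex^'n^'m" and x :: "'z \<Rightarrow> complex^'n"
  assumes "\<And>i j. continuous_on S (\<lambda>w. A w $ i $ j)" "\<And>j. continuous_on S (\<lambda>w. x w $ j)"
  shows "continuous_on S (\<lambda>w. (A w *v x w) $ i)"
  unfolding matrix_vector_mult_def by (simp, intro continuous_intros assms)

lemma cont_mm:
  fixes A :: "'z::topological_space \<Rightarrow> complex^'n^'m" and B :: "'z \<Rightarrow> complex^'k^'n"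
  assumes "\<And>i j. continuous_on S (\<lambda>w. A w $ i $ j)" "\<And>i j. continuous_on S (\<lambda>w. B w $ i $ j)"
  shows "continuous_on S (\<lambda>w. (A w ** B w) $ i $ j)"
  unfolding matrix_matrix_mult_def by (simp, intro continuous_intros assms)

lemma cont_jf:
  fixes x :: "'z::topological_space \<Rightarrow> complex^('p::finite + 'p)"
  assumes "\<And>i. continuous_on S (\<lambda>w. x w $ i)"
  shows "continuous_on S (\<lambda>w. jf (x w))"
  unfolding jf_def nsq_def lo_def hi_def by (simp, intro continuous_intros assms)

lemma open_lhp: "open lhp"
  unfolding lhp_def using open_halfspace_Im_lt[of 0] by simp

lemma lhp_nz: "w \<in> lhp \<Longrightarrow> w \<noteq> 0" by (auto simp: lhp_def)

lemma W_cont: "continuous_on lhp (\<lambda>w. Wsol \<beta> n w $ i $ j)"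
proof (induction n arbitrary: i j)
  case 0
  show ?case by simp
next
  case (Suc n)
  have c: "continuous_on lhp (\<lambda>w. (jmat ** Cmat \<beta> n ** Wsol \<beta> n w) $ i $ j)"
    by (rule cont_mm) (auto intro: Suc.IH)
  have d: "continuous_on lhp (\<lambda>w. \<i> / w)"
    by (intro continuous_intros) (auto dest: lhp_nz)
  show ?case
    unfolding Wsol.simps cmat_smult_def by (simp only: vector_minus_component vec_lambda_beta)
      (intro continuous_on_diff continuous_on_mult Suc.IH c d)
qed

lemma vv_cont:
  assumes hol: "mat_holomorphic_on \<phi> lhp"
  shows "continuous_on lhp (\<lambda>w. vv (\<phi> w) y $ i)"
  unfolding vv_def
proof (rule cont_mv)
  fix j :: "'a + 'a"
  have pc: "continuous_on lhp (\<lambda>w. \<phi> w $ a $ b)" for a b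
    using hol unfolding mat_holomorphic_on_def by (simp add: holomorphic_on_imp_continuous_on)
  have pv: "continuous_on lhp (\<lambda>w. (\<phi> w *v y) $ a)" for a
    by (rule cont_mv) (auto intro: pc)
  show "continuous_on lhp (\<lambda>w. cv ((-\<i>) *s (\<phi> w *v y)) y $ j)"
  proof (cases j)
    case (Inl a)
    then have "(\<lambda>w. cv ((-\<i>) *s (\<phi> w *v y)) y $ j) = (\<lambda>w. (-\<i>) * (\<phi> w *v y) $ a)"
      by (simp add: cv_def)
    then show ?thesis using continuous_on_mult[OF continuous_on_const pv] by metis
  next
    case (Inr a)
    then show ?thesis by (simp add: cv_def)
  qed
qed simp

lemma lim_le:
  fixes g :: "complex \<Rightarrow> real"
  assumes "continuous_on lhp g" "z \<in> lhp" "eventually (\<lambda>w. g w \<le> 0) (at z)"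
  shows "g z \<le> 0"
proof -
  have "isCont g z" using assms(1,2) open_lhp continuous_on_eq_continuous_at by blast
  then have "(g \<longlongrightarrow> g z) (at z)" by (simp add: isCont_def)
  then show ?thesis using tendsto_upperbound[OF _ assms(3)] trivial_limit_at by blast
qed

lemma ev_analytic:
  assumes "mat_meromorphic_on R lhp" "z \<in> lhp"
  shows "eventually (\<lambda>w. mat_analytic_at R w) (at z)"
proof -
  have "eventually (\<lambda>w. (\<lambda>w. R w $ i $ j) analytic_on {w}) (at z)" for i j
  proof -
    have "(\<lambda>w. R w $ i $ j) meromorphic_on {z}"
      using assms unfolding mat_meromorphic_on_def by (meson empty_subsetI insert_subset meromorphic_on_subset)
    then show ?thesis using meromorphic_on_isolated_singularity isolated_singularity_at_altdef by blast
  qed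
  then show ?thesis unfolding mat_analytic_at_def by (intro eventually_all_finite)
qed

lemma exist_bound:
  fixes \<beta> :: "nat \<Rightarrow> complex^('p::finite + 'p)^'p"
  assumes bJ: "\<And>k. \<beta> k ** Jmat ** adj (\<beta> k) = mat 1"
    and mem: "\<phi> \<in> (\<Inter>N. Ncal \<beta> N)" and z: "z \<in> lhp"
  shows "\<exists>B. \<forall>n. (\<Sum>k<n. tt \<beta> z k (vv (\<phi> z) y)) \<le> B"
proof -
  have hol: "mat_holomorphic_on \<phi> lhp" using mem by (auto simp: Ncal_def)
  have z0: "z \<noteq> 0" and zi: "Im z < 0" using z by (auto simp: lhp_def)
  let ?u = "vv (\<phi> z) y"
  have g: "jf (Wsol \<beta> (Suc N) z *v ?u) \<le> 0" for N
  proof -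
    from mem have "\<phi> \<in> Ncal \<beta> N" by blast
    then obtain R Q :: "complex \<Rightarrow> complex^'p^'p" where RQ: "mat_meromorphic_on R lhp" "mat_meromorphic_on Q lhp"
      "\<forall>w\<in>lhp. mat_analytic_at R w \<and> mat_analytic_at Q w \<longrightarrow>
           pd (adj (R w) ** R w + adj (Q w) ** Q w) \<and>
           loewner_le (adj (R w) ** R w) (adj (Q w) ** Q w) \<and>
           invertible (blk11 (Wcal \<beta> N w) ** R w + blk12 (Wcal \<beta> N w) ** Q w) \<and>
           \<phi> w = cmat_smult \<i> ((blk21 (Wcal \<beta> N w) ** R w + blk22 (Wcal \<beta> N w) ** Q w) **
                    matrix_inv (blk11 (Wcal \<beta> N w) ** R w + blk12 (Wcal \<beta> N w) ** Q w))"
      unfolding Ncal_def by blast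
    have ev: "eventually (\<lambda>w. jf (Wsol \<beta> (Suc N) w *v vv (\<phi> w) y) \<le> 0) (at z)"
      using eventually_at_in_open'[OF open_lhp z] ev_analytic[OF RQ(1) z] ev_analytic[OF RQ(2) z]
    proof eventually_elim
      case (elim w)
      then show ?case using RQ(3) ncal_pt[where \<beta>=\<beta>, OF bJ lhp_nz[OF elim(1)]] by blast
    qed
    have "continuous_on lhp (\<lambda>w. jf (Wsol \<beta> (Suc N) w *v vv (\<phi> w) y))"
      by (intro cont_jf cont_mv W_cont vv_cont hol)
    then show ?thesis using lim_le[OF _ z ev] by blast
  qed
  have e: "eps z > 0" using eps_pos[OF zi] .
  have bd: "(\<Sum>k<Suc N. tt \<beta> z k ?u) \<le> - jf ?u / eps z" for N
  proof -
    have "hh \<beta> z (Suc N) ?u \<le> 0"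
      unfolding hh_def using g[of N] qfun_pos[OF z0] by (simp add: mult_nonneg_nonpos)
    then have "jf ?u + eps z * (\<Sum>k<Suc N. tt \<beta> z k ?u) \<le> 0"
      using hh_sum[where \<beta>=\<beta>, OF bJ z0] by simp
    then show ?thesis using e by (simp add: field_simps)
  qed
  have "(\<Sum>k<n. tt \<beta> z k ?u) \<le> - jf ?u / eps z" for n
  proof -
    have "(\<Sum>k<n. tt \<beta> z k ?u) \<le> (\<Sum>k<Suc n. tt \<beta> z k ?u)"
      using tt_ge(2)[where \<beta>=\<beta>, OF bJ z0] by simp
    then show ?thesis using bd[of n] by linarith
  qed
  then show ?thesis by blast
qed

lemma Smat_eta: "Smat \<beta> z \<Phi> = (\<lambda>k. row2 (cmat_smult \<i> (adj \<Phi>)) (mat 1) **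
        ((qfun z ^ k) *\<^sub>R (Kmat ** adj (Wsol \<beta> k z) ** Cmat \<beta> k ** Wsol \<beta> k z ** adj Kmat)) **
        col2 (cmat_smult (-\<i>) \<Phi>) (mat 1))"
  by (rule ext) (simp only: Smat_def)

theorem theorem6p5:
  fixes \<beta> :: "nat \<Rightarrow> complex^('p::finite + 'p)^'p"
    and \<phi>inf :: "complex \<Rightarrow> complex^'p^'p"
  assumes beta_J: "\<And>k. \<beta> k ** Jmat ** adj (\<beta> k) = mat 1"
    and phi_inf_mem: "\<phi>inf \<in> (\<Inter>N. Ncal \<beta> N)"
  shows "weyl_function \<beta> \<phi>inf \<and>
         (\<forall>\<phi>. weyl_function \<beta> \<phi> \<longrightarrow> (\<forall>z\<in>lhp. \<phi> z = \<phi>inf z))"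
proof -
  have hol: "mat_holomorphic_on \<phi>inf lhp" using phi_inf_mem by (auto simp: Ncal_def)
  have sinf: "summable (Smat \<beta> z (\<phi>inf z))" if z: "z \<in> lhp" for z
  proof -
    have z0: "z \<noteq> 0" using z by (auto simp: lhp_def)
    show ?thesis
    proof (rule summable_from_forms)
      show "cin y (Smat \<beta> z (\<phi>inf z) k *v y) = complex_of_real (tt \<beta> z k (vv (\<phi>inf z) y))" for y k
        by (rule bridge)
      show "0 \<le> tt \<beta> z k (vv (\<phi>inf z) y)" for y k
        by (rule tt_ge(2)[where \<beta>=\<beta>, OF beta_J z0])
      show "\<exists>B. \<forall>n. (\<Sum>k<n. tt \<beta> z k (vv (\<phi>inf z) y)) \<le> B" for y
        by (rule exist_bound[OF beta_J phi_inf_mem z])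
    qed
  qed
  have W: "weyl_function \<beta> \<phi>inf"
    unfolding weyl_function_def using hol sinf by (simp add: Smat_eta)
  have U: "\<phi> z = \<phi>inf z" if wf: "weyl_function \<beta> \<phi>" and z: "z \<in> lhp" for \<phi> z
  proof -
    have z0: "z \<noteq> 0" and zi: "Im z < 0" using z by (auto simp: lhp_def)
    have s1: "summable (Smat \<beta> z (\<phi> z))"
      using wf z unfolding weyl_function_def by (simp add: Smat_eta)
    have bd: "\<exists>B. \<forall>n. (\<Sum>k<n. tt \<beta> z k (vv (\<Phi> z) y)) \<le> B"
      if "summable (Smat \<beta> z (\<Phi> z))" for \<Phi> :: "complex \<Rightarrow> complex^'p^'p" and y
      by (rule bounded_from_summable[OF that bridge tt_ge(2)[where \<beta>=\<beta>, OF beta_J z0]])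
    show ?thesis
      by (rule uniq_pt[where \<beta>=\<beta>, OF beta_J zi]) (use bd s1 sinf[OF z] in blast)+
  qed
  show ?thesis using W U by blast
qed


end
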